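(* Let $F$ be a $C^1$-closed smooth curve in the Euclidean plane parametrized by arc length $t\in[0,T]$ with signed curvature $k(t)$, and let $G\subset H^2$ be its development, i.e. a curve in the hyperbolic plane parametrized by arc length $t\in[0,T]$ whose signed geodesic curvature is $k(t)$. Then $G$ is $C^1$-closed if and only if the bicycle monodromy $M_F$ for the bicycle of length $\ell=1$ is the identity.
   Context: A differentiable curve is $C^1$-closed if its endpoints coincide and its oriented tangent lines at the endpoints coincide. The development $G$ is unique up to orientation-preserving isometry of $H^2$ (the hyperbolic plane of curvature $-1$). Bicycle model: a segment $RF$ of fixed length $\ell$ moves in the plane with the velocity of the rear end $R$ always parallel to $RF$; the bicycle monodromy $M_F$ is the self-map of the circle of radius $\ell$ sending the initial position of $R$ relative to the front end (moving along $F$) to its terminal position. *)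

theory Defs
  imports "HOL-Analysis.Analysis"
begin

definition smooth_curve :: "real \<Rightarrow> (real \<Rightarrow> 'a::real_normed_vector) \<Rightarrow> bool" where
  "smooth_curve T c \<longleftrightarrow> (\<exists>D. D 0 = c \<and>
     (\<forall>n. \<forall>t\<in>{0..T}. (D n has_vector_derivative D (Suc n) t) (at t within {0..T})))"

definition deriv1 :: "real \<Rightarrow> (real \<Rightarrow> 'a::real_normed_vector) \<Rightarrow> real \<Rightarrow> 'a" where
  "deriv1 T c t = vector_derivative c (at t within {0..T})"

definition deriv2 :: "real \<Rightarrow> (real \<Rightarrow> 'a::real_normed_vector) \<Rightarrow> real \<Rightarrow> 'a" where
  "deriv2 T c t = vector_derivative (deriv1 T c) (at t within {0..T})"

text \<open>C1-closed: endpoints coincide and the oriented tangent lines coincide; for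
 curves parametrized by arc length (unit speed) this is equality of velocities.\<close>
definition C1_closed :: "real \<Rightarrow> (real \<Rightarrow> 'a::real_normed_vector) \<Rightarrow> bool" where
  "C1_closed T c \<longleftrightarrow> c 0 = c T \<and> deriv1 T c 0 = deriv1 T c T"

definition det2 :: "real^2 \<Rightarrow> real^2 \<Rightarrow> real" where
  "det2 a b = a$1 * b$2 - a$2 * b$1"

definition signed_curvature :: "real \<Rightarrow> (real \<Rightarrow> real^2) \<Rightarrow> real \<Rightarrow> real" where
  "signed_curvature T F t = det2 (deriv1 T F t) (deriv2 T F t)"

definition mink :: "real^3 \<Rightarrow> real^3 \<Rightarrow> real" where
  "mink x y = x$1 * y$1 + x$2 * y$2 - x$3 * y$3"

definition H2 :: "(real^3) set" where
  "H2 = {x. mink x x = -1 \<and> x$3 > 0}"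

text \<open>Lorentzian cross product: mink (lcross a b) c = det [a;b;c].\<close>
definition lcross :: "real^3 \<Rightarrow> real^3 \<Rightarrow> real^3" where
  "lcross a b = vector [a$2 * b$3 - a$3 * b$2, a$3 * b$1 - a$1 * b$3,
                        -(a$1 * b$2 - a$2 * b$1)]"

text \<open>Covariant acceleration: orthogonal projection of the ambient acceleration to
 the tangent plane T_{G t} H2, i.e. v + mink v G * G.\<close>
definition cov_accel :: "real \<Rightarrow> (real \<Rightarrow> real^3) \<Rightarrow> real \<Rightarrow> real^3" where
  "cov_accel T G t = deriv2 T G t + mink (deriv2 T G t) (G t) *\<^sub>R G t"

text \<open>Signed geodesic curvature of a unit-speed curve in H2: component of the
 covariant acceleration along the positively rotated unit normal G x_L G'.\<close>
definition geodesic_curvature :: "real \<Rightarrow> (real \<Rightarrow> real^3) \<Rightarrow> real \<Rightarrow> real" where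
  "geodesic_curvature T G t = mink (cov_accel T G t) (lcross (G t) (deriv1 T G t))"

definition bicycle_rear :: "(real \<Rightarrow> real^2) \<Rightarrow> real \<Rightarrow> real \<Rightarrow> (real \<Rightarrow> real^2) \<Rightarrow> bool" where
  "bicycle_rear F l T R \<longleftrightarrow>
     (\<forall>t\<in>{0..T}. norm (F t - R t) = l \<and>
        (\<exists>v c. (R has_vector_derivative v) (at t within {0..T}) \<and> v = c *\<^sub>R (F t - R t)))"

definition bicycle_monodromy :: "(real \<Rightarrow> real^2) \<Rightarrow> real \<Rightarrow> real \<Rightarrow> real^2 \<Rightarrow> real^2" where
  "bicycle_monodromy F l T p =
     (THE q. \<exists>R. bicycle_rear F l T R \<and> R 0 - F 0 = p \<and> R T - F T = q)"

end

theory Submission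
  imports Defs
begin


lemma vd_iff:
  fixes f :: "real \<Rightarrow> real^'n"
  shows "(f has_vector_derivative f') (at t within S) \<longleftrightarrow>
    (\<forall>i. ((\<lambda>t. f t $ i) has_real_derivative f' $ i) (at t within S))"
  unfolding has_vector_derivative_def has_field_derivative_def
  apply (subst has_derivative_componentwise_within)
  apply (simp add: Basis_vec_def cart_eq_inner_axis[symmetric] mult_commute_abs)
  done

lemma mink_frame:
  assumes "mink a a = -1" "mink b b = 1" "mink a b = 0"
  shows "mink (lcross a b) (lcross a b) = 1" "mink (lcross a b) a = 0" "mink (lcross a b) b = 0"
proof -
  show "mink (lcross a b) (lcross a b) = 1" using assms unfolding mink_def lcross_def
    by (simp add: vector_def) algebra
  show "mink (lcross a b) a = 0" unfolding mink_def lcross_def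
    by (simp add: vector_def algebra_simps)
  show "mink (lcross a b) b = 0" unfolding mink_def lcross_def
    by (simp add: vector_def algebra_simps)
qed

lemma lcross_aN:
  assumes "mink a a = -1" "mink a b = 0"
  shows "lcross a (lcross a b) = - b"
  using assms unfolding mink_def lcross_def
  by (simp add: vec_eq_iff forall_3 vector_def) algebra

lemma expand_orth:
  assumes "mink a a = -1" "mink b b = 1" "mink a b = 0" "mink w a = 0" "mink w b = 0"
  shows "w = mink w (lcross a b) *\<^sub>R lcross a b"
  using assms unfolding mink_def lcross_def
  by (simp add: vec_eq_iff forall_3 vector_def) algebra

lemma expand_full:
  assumes "mink a a = -1" "mink b b = 1" "mink a b = 0"
  shows "mink v v = - (mink v a)*(mink v a) + (mink v b)*(mink v b) + (mink v (lcross a b))*(mink v (lcross a b))"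
  using assms unfolding mink_def lcross_def
  by (simp add: vector_def) algebra


lemma comp_deriv:
  fixes f :: "real \<Rightarrow> real^'n"
  shows "(f has_vector_derivative f') F \<Longrightarrow> ((\<lambda>t. f t $ i) has_real_derivative f' $ i) F"
  unfolding has_vector_derivative_def has_field_derivative_def
  apply (drule bounded_linear.has_derivative[OF bounded_linear_vec_nth[of i]])
  apply (simp add: mult_commute_abs)
  done

lemma dm: "(f has_real_derivative D) (at t within S) \<Longrightarrow> (g has_real_derivative E) (at t within S) \<Longrightarrow>
  ((\<lambda>x. f x * g x) has_real_derivative D * g t + f t * E) (at t within S)"
  by (drule (1) DERIV_mult) (simp add: algebra_simps)

lemmas dr = DERIV_add DERIV_diff dm DERIV_minus

lemma mink_deriv:
  assumes "(f has_vector_derivative f') (at t within S)" "(g has_vector_derivative g') (at t within S)"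
  shows "((\<lambda>t. mink (f t) (g t)) has_real_derivative (mink f' (g t) + mink (f t) g')) (at t within S)"
proof -
  note c = comp_deriv[OF assms(1)] comp_deriv[OF assms(2)]
  have "((\<lambda>t. f t $ 1 * g t $ 1 + f t $ 2 * g t $ 2 - f t $ 3 * g t $ 3) has_real_derivative
     (f' $ 1 * g t $ 1 + f t $ 1 * g' $ 1) + (f' $ 2 * g t $ 2 + f t $ 2 * g' $ 2) - (f' $ 3 * g t $ 3 + f t $ 3 * g' $ 3)) (at t within S)"
    by (intro dr c)
  thus ?thesis unfolding mink_def by (simp add: algebra_simps)
qed

lemma lcross_deriv:
  assumes "(f has_vector_derivative f') (at t within S)" "(g has_vector_derivative g') (at t within S)"
  shows "((\<lambda>t. lcross (f t) (g t)) has_vector_derivative (lcross f' (g t) + lcross (f t) g')) (at t within S)"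
proof -
  note c = comp_deriv[OF assms(1)] comp_deriv[OF assms(2)]
  have h1: "((\<lambda>t. f t $ 2 * g t $ 3 - f t $ 3 * g t $ 2) has_real_derivative
     (f' $ 2 * g t $ 3 + f t $ 2 * g' $ 3) - (f' $ 3 * g t $ 2 + f t $ 3 * g' $ 2)) (at t within S)"
    by (intro dr c)
  have h2: "((\<lambda>t. f t $ 3 * g t $ 1 - f t $ 1 * g t $ 3) has_real_derivative
     (f' $ 3 * g t $ 1 + f t $ 3 * g' $ 1) - (f' $ 1 * g t $ 3 + f t $ 1 * g' $ 3)) (at t within S)"
    by (intro dr c)
  have h3: "((\<lambda>t. -(f t $ 1 * g t $ 2 - f t $ 2 * g t $ 1)) has_real_derivative
     -((f' $ 1 * g t $ 2 + f t $ 1 * g' $ 2) - (f' $ 2 * g t $ 1 + f t $ 2 * g' $ 1))) (at t within S)"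
    by (intro dr c)
  show ?thesis unfolding vd_iff forall_3 lcross_def
    by (simp only: vector_3 vector_add_component) 
       (intro conjI; rule DERIV_cong; (rule h1 h2 h3)?; simp add: algebra_simps)
qed

definition dot2 :: "real^2 \<Rightarrow> real^2 \<Rightarrow> real" where "dot2 a b = a$1*b$1 + a$2*b$2"
definition rot2 :: "real^2 \<Rightarrow> real^2" where "rot2 a = vector [-(a$2), a$1]"

lemma rot2_deriv:
  assumes "(f has_vector_derivative f') (at t within S)"
  shows "((\<lambda>t. rot2 (f t)) has_vector_derivative rot2 f') (at t within S)"
proof -
  note c = comp_deriv[OF assms(1)]
  have h1: "((\<lambda>t. -(f t $ 2)) has_real_derivative -(f'$2)) (at t within S)" by (intro dr c)
  have h2: "((\<lambda>t. f t $ 1) has_real_derivative f'$1) (at t within S)" by (rule c)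
  show ?thesis unfolding vd_iff forall_2 rot2_def using h1 h2 by simp
qed

lemma dot2_deriv:
  assumes "(f has_vector_derivative f') (at t within S)" "(g has_vector_derivative g') (at t within S)"
  shows "((\<lambda>t. dot2 (f t) (g t)) has_real_derivative (dot2 f' (g t) + dot2 (f t) g')) (at t within S)"
proof -
  note c = comp_deriv[OF assms(1)] comp_deriv[OF assms(2)]
  have "((\<lambda>t. f t $ 1 * g t $ 1 + f t $ 2 * g t $ 2) has_real_derivative
     (f' $ 1 * g t $ 1 + f t $ 1 * g' $ 1) + (f' $ 2 * g t $ 2 + f t $ 2 * g' $ 2)) (at t within S)"
    by (intro dr c)
  thus ?thesis unfolding dot2_def by (simp add: algebra_simps)
qed

lemma F2a: fixes p q u w :: real shows "p * p+q * q = 1 \<Longrightarrow> p * u+q * w = 0 \<Longrightarrow> u = (p * w - q * u) * (-q)" by algebra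
lemma F2b: fixes p q u w :: real shows "p * p+q * q = 1 \<Longrightarrow> p * u+q * w = 0 \<Longrightarrow> w = (p * w - q * u) * p" by algebra
lemma R2a: fixes p q x y :: real shows "p * p+q * q = 1 \<Longrightarrow> x = (x * p+y * q) * p + (x * (-q)+y * p) * (-q)" by algebra
lemma R2b: fixes p q x y :: real shows "p * p+q * q = 1 \<Longrightarrow> y = (x * p+y * q) * q + (x * (-q)+y * p) * p" by algebra
lemma P2: fixes p q x y :: real shows "p * p+q * q = 1 \<Longrightarrow> x * x+y * y = (x * p+y * q) * (x * p+y * q) + (x * (-q)+y * p) * (x * (-q)+y * p)" by algebra

lemma mink_sym: "mink x y = mink y x" by (simp add: mink_def algebra_simps)
lemma mink_add_left: "mink (x + y) z = mink x z + mink y z" by (simp add: mink_def algebra_simps)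
lemma mink_diff_left: "mink (x - y) z = mink x z - mink y z" by (simp add: mink_def algebra_simps)
lemma mink_scaleR_left: "mink (c *\<^sub>R x) z = c * mink x z" by (simp add: mink_def algebra_simps)
lemma mink_minus_left: "mink (- x) z = - mink x z" by (simp add: mink_def algebra_simps)
lemma mink_zero_left: "mink 0 z = 0" by (simp add: mink_def)
lemma mink_add_right: "mink z (x + y) = mink z x + mink z y" by (simp add: mink_def algebra_simps)
lemma mink_diff_right: "mink z (x - y) = mink z x - mink z y" by (simp add: mink_def algebra_simps)
lemma mink_scaleR_right: "mink z (c *\<^sub>R x) = c * mink z x" by (simp add: mink_def algebra_simps)
lemma mink_minus_right: "mink z (- x) = - mink z x" by (simp add: mink_def algebra_simps)
lemma mink_zero_right: "mink z 0 = 0" by (simp add: mink_def)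
lemmas mink_lin = mink_add_left mink_diff_left mink_scaleR_left mink_minus_left mink_zero_left
  mink_add_right mink_diff_right mink_scaleR_right mink_minus_right mink_zero_right

lemma dot2_sym: "dot2 x y = dot2 y x" by (simp add: dot2_def algebra_simps)

lemma norm2: "norm (x::real^2) = sqrt (dot2 x x)"
  by (simp add: norm_eq_sqrt_inner inner_vec_def sum_2 dot2_def)

lemma norm2_1: "norm (x::real^2) = 1 \<longleftrightarrow> dot2 x x = 1"
  by (simp add: norm2)

lemma lcross_scaleR_left: "lcross (c *\<^sub>R x) y = c *\<^sub>R lcross x y"
  by (simp add: lcross_def vec_eq_iff forall_3 algebra_simps)
lemma lcross_add_right: "lcross x (y + z) = lcross x y + lcross x z"
  by (simp add: lcross_def vec_eq_iff forall_3 algebra_simps)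
lemma lcross_scaleR_right: "lcross x (c *\<^sub>R y) = c *\<^sub>R lcross x y"
  by (simp add: lcross_def vec_eq_iff forall_3 algebra_simps)
lemma lcross_self: "lcross x x = 0"
  by (simp add: lcross_def vec_eq_iff forall_3 algebra_simps)
lemma lcross_zero_right: "lcross x 0 = 0"
  by (simp add: lcross_def vec_eq_iff forall_3)

lemma deriv_const0:
  fixes f :: "real \<Rightarrow> real"
  assumes "a < b" "x \<in> {a..b}" "(f has_real_derivative d) (at x within {a..b})"
    "\<forall>s\<in>{a..b}. f s = c"
  shows "d = 0"
proof -
  have h: "((\<lambda>s. c) has_real_derivative 0) (at x within {a..b})" by (rule DERIV_const)
  have "(f has_real_derivative 0) (at x within {a..b})"
    by (rule has_field_derivative_transform_within[OF h zero_less_one assms(2)]) (use assms(4) in auto)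
  hence "(f has_vector_derivative 0) (at x within {a..b})"
    by (simp only: has_real_derivative_iff_has_vector_derivative)
  hence e1: "vector_derivative f (at x within {a..b}) = 0"
    by (rule vector_derivative_within_closed_interval[OF assms(1,2)])
  have "(f has_vector_derivative d) (at x within {a..b})"
    using assms(3) by (simp only: has_real_derivative_iff_has_vector_derivative)
  hence "vector_derivative f (at x within {a..b}) = d"
    by (rule vector_derivative_within_closed_interval[OF assms(1,2)])
  thus ?thesis using e1 by simp
qed

lemma F2_form:
  assumes "dot2 a a = 1" "dot2 a b = 0"
  shows "b = det2 a b *\<^sub>R rot2 a"
proof -
  have h: "a$1*a$1+a$2*a$2 = 1" "a$1*b$1+a$2*b$2 = 0" using assms by (simp_all add: dot2_def)
  show ?thesis using F2a[OF h] F2b[OF h] by (simp add: vec_eq_iff forall_2 rot2_def det2_def)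
qed

lemma recon2:
  assumes "dot2 a a = 1"
  shows "d = dot2 d a *\<^sub>R a + dot2 d (rot2 a) *\<^sub>R rot2 a"
proof -
  have h: "a$1*a$1+a$2*a$2 = 1" using assms by (simp_all add: dot2_def)
  show ?thesis using R2a[OF h, where x="d$1" and y="d$2"] R2b[OF h, where x="d$1" and y="d$2"]
    by (simp add: vec_eq_iff forall_2 rot2_def dot2_def)
qed

lemma pyth2:
  assumes "dot2 a a = 1"
  shows "dot2 d d = dot2 d a * dot2 d a + dot2 d (rot2 a) * dot2 d (rot2 a)"
proof -
  have h: "a$1*a$1+a$2*a$2 = 1" using assms by (simp_all add: dot2_def)
  show ?thesis using P2[OF h, where x="d$1" and y="d$2"] by (simp add: rot2_def dot2_def)
qed

lemma rot2_rot2: "rot2 (rot2 a) = - a"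
  by (simp add: rot2_def vec_eq_iff forall_2)

lemma rot2_scaleR: "rot2 (c *\<^sub>R a) = c *\<^sub>R rot2 a"
  by (simp add: rot2_def vec_eq_iff forall_2)

lemma null_timelike:
  assumes "mink x x = 0" "x \<noteq> 0" "mink g g = -1"
  shows "mink x g \<noteq> 0"
proof
  assume h: "mink x g = 0"
  have e1: "x$1*x$1 + x$2*x$2 = x$3*x$3" using assms(1) by (simp add: mink_def)
  have e2: "g$1*g$1 + g$2*g$2 = g$3*g$3 - 1" using assms(3) by (simp add: mink_def)
  have e3: "x$1*g$1 + x$2*g$2 = x$3*g$3" using h by (simp add: mink_def)
  have "x$3*x$3 = - ((x$1*g$2 - x$2*g$1)*(x$1*g$2 - x$2*g$1))"
    using e1 e2 e3 by algebra
  hence "x$3*x$3 \<le> 0" by simp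
  hence x3: "x$3 = 0" by (metis mult_eq_0_iff mult_le_0_iff order_antisym_conv zero_le_square)
  hence "x$1 = 0" "x$2 = 0" using e1 by (auto simp: add_nonneg_eq_0_iff)
  thus False using x3 assms(2) by (simp add: vec_eq_iff forall_3)
qed

lemma par3:
  assumes "lcross x y = 0" "y \<noteq> 0"
  shows "\<exists>\<mu>. x = \<mu> *\<^sub>R y"
proof -
  let ?s = "y$1*y$1 + y$2*y$2 + y$3*y$3"
  have nz: "y$1 \<noteq> 0 \<or> y$2 \<noteq> 0 \<or> y$3 \<noteq> 0" using assms(2) by (simp add: vec_eq_iff forall_3)
  have s: "?s > 0"
  proof -
    have a: "0 \<le> y$1*y$1" "0 \<le> y$2*y$2" "0 \<le> y$3*y$3" by simp_all
    from nz have "0 < y$1*y$1 \<or> 0 < y$2*y$2 \<or> 0 < y$3*y$3" by (meson not_real_square_gt_zero)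
    thus ?thesis using a by linarith
  qed
  have c: "y$2 * x$3 - y$3 * x$2 = 0" "y$3 * x$1 - y$1 * x$3 = 0" "y$1 * x$2 - y$2 * x$1 = 0"
    using assms(1) by (simp_all add: lcross_def vec_eq_iff forall_3 algebra_simps)
  define P where "P = x$1*y$1 + x$2*y$2 + x$3*y$3"
  define S where "S = y$1*y$1 + y$2*y$2 + y$3*y$3"
  have S: "S > 0" using s S_def by simp
  have h: "x$1 * S = P * y$1" "x$2 * S = P * y$2" "x$3 * S = P * y$3"
    unfolding S_def P_def using c by algebra+
  have g: "(P / S) * y$i = x$i" if "x$i * S = P * y$i" for i
  proof -
    have "(P / S) * y$i = (P * y$i) / S" by simp
    also have "\<dots> = (x$i * S) / S" using that by simp
    also have "\<dots> = x$i" using S by simp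
    finally show ?thesis .
  qed
  have "x = (P / S) *\<^sub>R y"
    using g[OF h(1)] g[OF h(2)] g[OF h(3)] by (simp add: vec_eq_iff forall_3)
  thus ?thesis by blast
qed



locale bike =
  fixes T :: real and F F1 F2 :: "real \<Rightarrow> real^2" and G G1 G2 :: "real \<Rightarrow> real^3"
  assumes Tpos: "0 < T"
  and dF: "\<And>t. t \<in> {0..T} \<Longrightarrow> (F has_vector_derivative F1 t) (at t within {0..T})"
  and dF1: "\<And>t. t \<in> {0..T} \<Longrightarrow> (F1 has_vector_derivative F2 t) (at t within {0..T})"
  and dG: "\<And>t. t \<in> {0..T} \<Longrightarrow> (G has_vector_derivative G1 t) (at t within {0..T})"
  and dG1: "\<And>t. t \<in> {0..T} \<Longrightarrow> (G1 has_vector_derivative G2 t) (at t within {0..T})"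
  and unitF: "\<And>t. t \<in> {0..T} \<Longrightarrow> dot2 (F1 t) (F1 t) = 1"
  and HG: "\<And>t. t \<in> {0..T} \<Longrightarrow> mink (G t) (G t) = -1"
  and HG3: "\<And>t. t \<in> {0..T} \<Longrightarrow> G t $ 3 > 0"
  and unitG: "\<And>t. t \<in> {0..T} \<Longrightarrow> mink (G1 t) (G1 t) = 1"
  and curv: "\<And>t. t \<in> {0..T} \<Longrightarrow>
     mink (G2 t + mink (G2 t) (G t) *\<^sub>R G t) (lcross (G t) (G1 t)) = det2 (F1 t) (F2 t)"
begin

definition N :: "real \<Rightarrow> real^3" where "N = (\<lambda>t. lcross (G t) (G1 t))"
definition kap :: "real \<Rightarrow> real" where "kap t = det2 (F1 t) (F2 t)"

lemma GG1: assumes t: "t \<in> {0..T}" shows "mink (G t) (G1 t) = 0"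
proof -
  have "((\<lambda>s. mink (G s) (G s)) has_real_derivative (mink (G1 t) (G t) + mink (G t) (G1 t))) (at t within {0..T})"
    by (rule mink_deriv[OF dG[OF t] dG[OF t]])
  hence "mink (G1 t) (G t) + mink (G t) (G1 t) = 0"
    by (rule deriv_const0[OF Tpos t]) (use HG in auto)
  thus ?thesis by (simp add: mink_sym)
qed

lemma G1G2: assumes t: "t \<in> {0..T}" shows "mink (G1 t) (G2 t) = 0"
proof -
  have "((\<lambda>s. mink (G1 s) (G1 s)) has_real_derivative (mink (G2 t) (G1 t) + mink (G1 t) (G2 t))) (at t within {0..T})"
    by (rule mink_deriv[OF dG1[OF t] dG1[OF t]])
  hence "mink (G2 t) (G1 t) + mink (G1 t) (G2 t) = 0"
    by (rule deriv_const0[OF Tpos t]) (use unitG in auto)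
  thus ?thesis by (simp add: mink_sym)
qed

lemma GG2: assumes t: "t \<in> {0..T}" shows "mink (G t) (G2 t) = -1"
proof -
  have "((\<lambda>s. mink (G s) (G1 s)) has_real_derivative (mink (G1 t) (G1 t) + mink (G t) (G2 t))) (at t within {0..T})"
    by (rule mink_deriv[OF dG[OF t] dG1[OF t]])
  hence "mink (G1 t) (G1 t) + mink (G t) (G2 t) = 0"
    by (rule deriv_const0[OF Tpos t]) (use GG1 in auto)
  thus ?thesis using unitG[OF t] by simp
qed

lemma frame:
  assumes t: "t \<in> {0..T}"
  shows "mink (G t) (G t) = -1" "mink (G1 t) (G1 t) = 1" "mink (G t) (G1 t) = 0" "mink (G1 t) (G t) = 0"
    "mink (N t) (N t) = 1" "mink (N t) (G t) = 0" "mink (N t) (G1 t) = 0"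
    "mink (G t) (N t) = 0" "mink (G1 t) (N t) = 0"
  using HG[OF t] unitG[OF t] GG1[OF t] mink_frame[OF HG[OF t] unitG[OF t] GG1[OF t]]
  by (auto simp: N_def mink_sym)

lemma G2eq: assumes t: "t \<in> {0..T}" shows "G2 t = G t + kap t *\<^sub>R N t"
proof -
  let ?w = "G2 t - G t"
  have w1: "mink ?w (G t) = 0" using GG2[OF t] HG[OF t] by (simp add: mink_lin mink_sym)
  have w2: "mink ?w (G1 t) = 0" using G1G2[OF t] GG1[OF t] by (simp add: mink_lin mink_sym)
  have "?w = mink ?w (N t) *\<^sub>R N t"
    unfolding N_def by (rule expand_orth[OF HG[OF t] unitG[OF t] GG1[OF t] w1 w2])
  moreover have "mink ?w (N t) = kap t"
    using curv[OF t] GG2[OF t] unfolding kap_def N_def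
    by (simp add: mink_sym algebra_simps)
  ultimately show ?thesis by (metis add.commute diff_add_cancel)
qed

lemma dN: assumes t: "t \<in> {0..T}" shows "(N has_vector_derivative (- kap t) *\<^sub>R G1 t) (at t within {0..T})"
proof -
  have "(N has_vector_derivative (lcross (G1 t) (G1 t) + lcross (G t) (G2 t))) (at t within {0..T})"
    unfolding N_def by (rule lcross_deriv[OF dG[OF t] dG1[OF t]])
  moreover have "lcross (G1 t) (G1 t) + lcross (G t) (G2 t) = (- kap t) *\<^sub>R G1 t"
    using G2eq[OF t] lcross_aN[OF HG[OF t] GG1[OF t]]
    by (simp add: lcross_self lcross_add_right lcross_scaleR_right N_def)
  ultimately show ?thesis by simp
qed

lemma F1F2: assumes t: "t \<in> {0..T}" shows "dot2 (F1 t) (F2 t) = 0"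
proof -
  have "((\<lambda>s. dot2 (F1 s) (F1 s)) has_real_derivative (dot2 (F2 t) (F1 t) + dot2 (F1 t) (F2 t))) (at t within {0..T})"
    by (rule dot2_deriv[OF dF1[OF t] dF1[OF t]])
  hence "dot2 (F2 t) (F1 t) + dot2 (F1 t) (F2 t) = 0"
    by (rule deriv_const0[OF Tpos t]) (use unitF in auto)
  thus ?thesis by (simp add: dot2_sym)
qed

lemma F2eq: assumes t: "t \<in> {0..T}" shows "F2 t = kap t *\<^sub>R rot2 (F1 t)"
  unfolding kap_def by (rule F2_form[OF unitF[OF t] F1F2[OF t]])

lemma rotF2: assumes t: "t \<in> {0..T}" shows "rot2 (F2 t) = (- kap t) *\<^sub>R F1 t"
  using F2eq[OF t] by (simp add: rot2_scaleR rot2_rot2)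


lemma zero_in: "0 \<in> {0..T}" "T \<in> {0..T}" using Tpos by auto

definition u1 :: "(real \<Rightarrow> real^2) \<Rightarrow> real \<Rightarrow> real" where "u1 R t = dot2 (R t - F t) (F1 t)"
definition u2 :: "(real \<Rightarrow> real^2) \<Rightarrow> real \<Rightarrow> real" where "u2 R t = dot2 (R t - F t) (rot2 (F1 t))"
definition xi :: "(real \<Rightarrow> real^2) \<Rightarrow> real \<Rightarrow> real^3" where
  "xi R = (\<lambda>t. G t + u1 R t *\<^sub>R G1 t + u2 R t *\<^sub>R N t)"

lemma xi_gen:
  assumes t: "t \<in> {0..T}"
  shows "mink (G t + a *\<^sub>R G1 t + b *\<^sub>R N t) (G t) = -1"
    "mink (G t + a *\<^sub>R G1 t + b *\<^sub>R N t) (G1 t) = a"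
    "mink (G t + a *\<^sub>R G1 t + b *\<^sub>R N t) (N t) = b"
  using frame[OF t] by (simp_all add: mink_lin)

lemma xi_self:
  assumes t: "t \<in> {0..T}"
  shows "mink (G t + a *\<^sub>R G1 t + b *\<^sub>R N t) (G t + a *\<^sub>R G1 t + b *\<^sub>R N t) = -1 + a*a + b*b"
  using frame[OF t] by (simp add: mink_lin algebra_simps)

lemma recon: assumes t: "t \<in> {0..T}" shows "R t - F t = u1 R t *\<^sub>R F1 t + u2 R t *\<^sub>R rot2 (F1 t)"
  unfolding u1_def u2_def by (rule recon2[OF unitF[OF t]])

lemma vec_ident:
  fixes A B C :: "real^3"
  shows "B + (a *\<^sub>R (A + k *\<^sub>R C) + (a*a - 1 + k*b) *\<^sub>R B) + (b *\<^sub>R ((- k) *\<^sub>R B) + (a*b - k*a) *\<^sub>R C)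
     = a *\<^sub>R (A + a *\<^sub>R B + b *\<^sub>R C)"
  by (simp add: vec_eq_iff forall_3 algebra_simps)


lemma track_basic:
  assumes "bicycle_rear F 1 T R"
  obtains c where "\<And>t. t \<in> {0..T} \<Longrightarrow> (R has_vector_derivative c t *\<^sub>R (F t - R t)) (at t within {0..T})"
    "\<And>t. t \<in> {0..T} \<Longrightarrow> dot2 (R t - F t) (R t - F t) = 1"
proof -
  have "\<forall>t\<in>{0..T}. \<exists>c. (R has_vector_derivative c *\<^sub>R (F t - R t)) (at t within {0..T})"
    using assms unfolding bicycle_rear_def by blast
  then obtain c where c: "\<forall>t\<in>{0..T}. (R has_vector_derivative c t *\<^sub>R (F t - R t)) (at t within {0..T})"
    by (metis bchoice)
  have "dot2 (R t - F t) (R t - F t) = 1" if "t \<in> {0..T}" for t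
  proof -
    have "norm (F t - R t) = 1" using assms that unfolding bicycle_rear_def by blast
    hence "norm (R t - F t) = 1" by (simp add: norm_minus_commute)
    thus ?thesis by (simp add: norm2_1)
  qed
  thus ?thesis using that c by blast
qed

lemma track_deriv:
  assumes "bicycle_rear F 1 T R" and t: "t \<in> {0..T}"
  shows "((\<lambda>s. R s - F s) has_vector_derivative (u1 R t *\<^sub>R (R t - F t) - F1 t)) (at t within {0..T})"
    "((u1 R) has_real_derivative (u1 R t * u1 R t - 1 + kap t * u2 R t)) (at t within {0..T})"
    "((u2 R) has_real_derivative (u1 R t * u2 R t - kap t * u1 R t)) (at t within {0..T})"
proof -
  obtain c where dR: "\<And>t. t \<in> {0..T} \<Longrightarrow> (R has_vector_derivative c t *\<^sub>R (F t - R t)) (at t within {0..T})"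
    and nd: "\<And>t. t \<in> {0..T} \<Longrightarrow> dot2 (R t - F t) (R t - F t) = 1"
    using track_basic[OF assms(1)] by blast
  have dd: "((\<lambda>s. R s - F s) has_vector_derivative (c t *\<^sub>R (F t - R t) - F1 t)) (at t within {0..T})"
    by (rule has_vector_derivative_diff[OF dR[OF t] dF[OF t]])
  have e: "dot2 (c t *\<^sub>R (F t - R t) - F1 t) (R t - F t) + dot2 (R t - F t) (c t *\<^sub>R (F t - R t) - F1 t) = 0"
    by (rule deriv_const0[OF Tpos t dot2_deriv[OF dd dd]]) (use nd in auto)
  have cval: "c t = - u1 R t"
    using e nd[OF t] unfolding dot2_def u1_def by simp algebra
  have D: "c t *\<^sub>R (F t - R t) - F1 t = u1 R t *\<^sub>R (R t - F t) - F1 t"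
    using cval by (simp add: algebra_simps)
  show dd': "((\<lambda>s. R s - F s) has_vector_derivative (u1 R t *\<^sub>R (R t - F t) - F1 t)) (at t within {0..T})"
    using dd D by simp
  have u1f: "(\<lambda>s. dot2 (R s - F s) (F1 s)) = u1 R" by (simp add: u1_def fun_eq_iff)
  have u2f: "(\<lambda>s. dot2 (R s - F s) (rot2 (F1 s))) = u2 R" by (simp add: u2_def fun_eq_iff)
  have "((u1 R) has_real_derivative
      (dot2 (u1 R t *\<^sub>R (R t - F t) - F1 t) (F1 t) + dot2 (R t - F t) (F2 t))) (at t within {0..T})"
    using dot2_deriv[OF dd' dF1[OF t]] unfolding u1f .
  moreover have "dot2 (u1 R t *\<^sub>R (R t - F t) - F1 t) (F1 t) + dot2 (R t - F t) (F2 t)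
      = u1 R t * u1 R t - 1 + kap t * u2 R t"
  proof -
    have u: "F1 t $ 1 * F1 t $ 1 + F1 t $ 2 * F1 t $ 2 = 1" using unitF[OF t] by (simp add: dot2_def)
    show ?thesis unfolding F2eq[OF t]
      using u unfolding u1_def u2_def dot2_def rot2_def by simp algebra
  qed
  ultimately show "((u1 R) has_real_derivative (u1 R t * u1 R t - 1 + kap t * u2 R t)) (at t within {0..T})"
    by simp
  have "((u2 R) has_real_derivative
      (dot2 (u1 R t *\<^sub>R (R t - F t) - F1 t) (rot2 (F1 t)) + dot2 (R t - F t) (rot2 (F2 t)))) (at t within {0..T})"
    using dot2_deriv[OF dd' rot2_deriv[OF dF1[OF t]]] unfolding u2f .
  moreover have "dot2 (u1 R t *\<^sub>R (R t - F t) - F1 t) (rot2 (F1 t)) + dot2 (R t - F t) (rot2 (F2 t))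
      = u1 R t * u2 R t - kap t * u1 R t"
    unfolding rotF2[OF t] unfolding u1_def u2_def dot2_def rot2_def by simp algebra
  ultimately show "((u2 R) has_real_derivative (u1 R t * u2 R t - kap t * u1 R t)) (at t within {0..T})"
    by simp
qed


lemma dxi:
  assumes R: "bicycle_rear F 1 T R" and t: "t \<in> {0..T}"
  shows "(xi R has_vector_derivative u1 R t *\<^sub>R xi R t) (at t within {0..T})"
proof -
  note du = track_deriv[OF R t]
  have "(xi R has_vector_derivative (G1 t + (u1 R t *\<^sub>R G2 t + (u1 R t * u1 R t - 1 + kap t * u2 R t) *\<^sub>R G1 t)
      + (u2 R t *\<^sub>R ((- kap t) *\<^sub>R G1 t) + (u1 R t * u2 R t - kap t * u1 R t) *\<^sub>R N t))) (at t within {0..T})"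
    unfolding xi_def
    by (intro has_vector_derivative_add has_vector_derivative_scaleR dG[OF t] dG1[OF t] dN[OF t] du(2) du(3))
  moreover have "G1 t + (u1 R t *\<^sub>R G2 t + (u1 R t * u1 R t - 1 + kap t * u2 R t) *\<^sub>R G1 t)
      + (u2 R t *\<^sub>R ((- kap t) *\<^sub>R G1 t) + (u1 R t * u2 R t - kap t * u1 R t) *\<^sub>R N t) = u1 R t *\<^sub>R xi R t"
    unfolding G2eq[OF t] xi_def by (rule vec_ident)
  ultimately show ?thesis by simp
qed

lemma u1_le1:
  assumes R: "bicycle_rear F 1 T R" and t: "t \<in> {0..T}"
  shows "u1 R t \<le> 1"
proof -
  obtain c where nd: "\<And>t. t \<in> {0..T} \<Longrightarrow> dot2 (R t - F t) (R t - F t) = 1"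
    using track_basic[OF R] by blast
  have "u1 R t * u1 R t + u2 R t * u2 R t = 1"
    using pyth2[OF unitF[OF t], of "R t - F t"] nd[OF t] unfolding u1_def u2_def by simp
  hence h: "u1 R t * u1 R t \<le> 1" by (smt (verit) zero_le_square)  
  show ?thesis
  proof (rule ccontr)
    assume "\<not> u1 R t \<le> 1"
    hence "1 < u1 R t" by simp
    hence "1 * 1 < u1 R t * u1 R t" by (intro mult_strict_mono) auto
    thus False using h by simp
  qed
qed

lemma track_xi:
  assumes R: "bicycle_rear F 1 T R"
  shows "\<exists>\<mu>. xi R T = \<mu> *\<^sub>R xi R 0"
proof -
  define w where "w = (\<lambda>s. lcross (xi R s) (xi R 0))"
  define z where "z = (\<lambda>s. w s $ 1 * w s $ 1 + w s $ 2 * w s $ 2 + w s $ 3 * w s $ 3)"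
  define f where "f = (\<lambda>s. exp (- 2 * s) * z s)"
  have dw: "(w has_vector_derivative u1 R t *\<^sub>R w t) (at t within {0..T})" if t: "t \<in> {0..T}" for t
  proof -
    have "(w has_vector_derivative lcross (u1 R t *\<^sub>R xi R t) (xi R 0) + lcross (xi R t) 0) (at t within {0..T})"
      unfolding w_def by (rule lcross_deriv[OF dxi[OF R t] has_vector_derivative_const])
    thus ?thesis by (simp add: lcross_scaleR_left lcross_zero_right w_def)
  qed
  have dz: "(z has_real_derivative 2 * u1 R t * z t) (at t within {0..T})" if t: "t \<in> {0..T}" for t
  proof -
    note c = comp_deriv[OF dw[OF t]]
    have "(z has_real_derivative ((u1 R t *\<^sub>R w t)$1 * w t $1 + w t $1 * (u1 R t *\<^sub>R w t)$1)
       + ((u1 R t *\<^sub>R w t)$2 * w t $2 + w t $2 * (u1 R t *\<^sub>R w t)$2)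
       + ((u1 R t *\<^sub>R w t)$3 * w t $3 + w t $3 * (u1 R t *\<^sub>R w t)$3)) (at t within {0..T})"
      unfolding z_def by (intro dr c)
    thus ?thesis by (rule DERIV_cong) (simp add: z_def algebra_simps)
  qed
  have df: "(f has_real_derivative exp (- 2 * t) * (-2 * 1) * z t + exp (- 2 * t) * (2 * u1 R t * z t)) (at t within {0..T})"
    if t: "t \<in> {0..T}" for t
  proof -
    have "((\<lambda>s. exp (- 2 * s)) has_real_derivative exp (- 2 * t) * (-2 * 1)) (at t)"
      by (intro DERIV_fun_exp DERIV_cmult DERIV_ident)
    hence e: "((\<lambda>s. exp (- 2 * s)) has_real_derivative exp (- 2 * t) * (-2 * 1)) (at t within {0..T})"
      by (rule has_field_derivative_at_within)
    show ?thesis unfolding f_def by (rule dm[OF e dz[OF t]])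
  qed
  have zpos: "z s \<ge> 0" for s unfolding z_def by simp
  have "f T \<le> f 0"
  proof (rule DERIV_nonpos_imp_decreasing_open[of 0 T f])
    show "0 \<le> T" using Tpos by simp
    show "continuous_on {0..T} f"
      unfolding continuous_on_eq_continuous_within using df DERIV_continuous by blast
    fix x assume x: "0 < x" "x < T"
    hence xI: "x \<in> {0..T}" by simp
    have "(f has_real_derivative exp (- 2 * x) * (-2 * 1) * z x + exp (- 2 * x) * (2 * u1 R x * z x)) (at x)"
      using df[OF xI] at_within_Icc_at[OF x] by simp
    moreover have "exp (- 2 * x) * (-2 * 1) * z x + exp (- 2 * x) * (2 * u1 R x * z x)
        = (2 * exp (- 2 * x) * z x) * (u1 R x - 1)" by (simp add: algebra_simps)
    moreover have "(2 * exp (- 2 * x) * z x) * (u1 R x - 1) \<le> 0"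
      using zpos[of x] u1_le1[OF R xI] by (intro mult_nonneg_nonpos) auto
    ultimately show "\<exists>y. (f has_real_derivative y) (at x) \<and> y \<le> 0" by auto
  qed
  moreover have "f 0 = 0" unfolding f_def z_def w_def by (simp add: lcross_self)
  ultimately have "exp (- 2 * T) * z T \<le> 0" unfolding f_def by simp
  hence "z T \<le> 0" by (simp add: mult_le_0_iff)
  hence "z T = 0" using zpos[of T] by simp
  hence "w T $ 1 * w T $ 1 = 0 \<and> w T $ 2 * w T $ 2 = 0 \<and> w T $ 3 * w T $ 3 = 0"
    unfolding z_def by (smt (verit) zero_le_square)
  hence "w T = 0" by (simp add: vec_eq_iff forall_3)
  hence wT: "lcross (xi R T) (xi R 0) = 0" by (simp add: w_def)
  have "mink (xi R 0) (G 0) = -1" unfolding xi_def using xi_gen(1)[OF zero_in(1)] by simp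
  hence "xi R 0 \<noteq> 0" by (auto simp: mink_zero_left)
  thus ?thesis by (rule par3[OF wT])
qed


lemma xi_coords:
  assumes t: "t \<in> {0..T}"
  shows "mink (xi R t) (G t) = -1" "mink (xi R t) (G1 t) = u1 R t" "mink (xi R t) (N t) = u2 R t"
  unfolding xi_def using xi_gen[OF t] by simp_all

lemma uniq:
  assumes Ra: "bicycle_rear F 1 T Ra" and Rb: "bicycle_rear F 1 T Rb"
    and eq: "Ra 0 - F 0 = Rb 0 - F 0"
  shows "Ra T - F T = Rb T - F T"
proof -
  have x0: "xi Ra 0 = xi Rb 0" unfolding xi_def u1_def u2_def using eq by simp
  obtain \<mu>a where a: "xi Ra T = \<mu>a *\<^sub>R xi Ra 0" using track_xi[OF Ra] by blast
  obtain \<mu>b where b: "xi Rb T = \<mu>b *\<^sub>R xi Ra 0" using track_xi[OF Rb] x0 by auto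
  have ea: "\<mu>a * mink (xi Ra 0) (G T) = -1"
    using xi_coords(1)[OF zero_in(2), of Ra] a by (simp add: mink_lin)
  have eb: "\<mu>b * mink (xi Ra 0) (G T) = -1"
    using xi_coords(1)[OF zero_in(2), of Rb] b by (simp add: mink_lin)
  have "mink (xi Ra 0) (G T) \<noteq> 0" using ea by auto
  hence "\<mu>a = \<mu>b" using ea eb by (metis mult_right_cancel)
  hence xT: "xi Ra T = xi Rb T" using a b by simp
  have "u1 Ra T = u1 Rb T" using xi_coords(2)[OF zero_in(2), of Ra] xi_coords(2)[OF zero_in(2), of Rb] xT by simp
  moreover have "u2 Ra T = u2 Rb T" using xi_coords(3)[OF zero_in(2), of Ra] xi_coords(3)[OF zero_in(2), of Rb] xT by simp
  ultimately show ?thesis using recon[OF zero_in(2), of Ra] recon[OF zero_in(2), of Rb] by simp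
qed

lemma mono_val:
  assumes R: "bicycle_rear F 1 T R"
  shows "bicycle_monodromy F 1 T (R 0 - F 0) = R T - F T"
  unfolding bicycle_monodromy_def
proof (rule the_equality)
  show "\<exists>R'. bicycle_rear F 1 T R' \<and> R' 0 - F 0 = R 0 - F 0 \<and> R' T - F T = R T - F T"
    using R by blast
  fix q assume "\<exists>R'. bicycle_rear F 1 T R' \<and> R' 0 - F 0 = R 0 - F 0 \<and> R' T - F T = q"
  then obtain R' where "bicycle_rear F 1 T R'" "R' 0 - F 0 = R 0 - F 0" "R' T - F T = q" by blast
  thus "q = R T - F T" using uniq[OF _ R] by blast
qed

lemma coefA: fixes a k m1 m2 :: real assumes "a \<noteq> 0"
  shows "1 + ((- a + k * m2) * a - m1 * (- m1)) / (a * a) - k * (m2 / a) = (m1 / a) * (m1 / a)"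
  using assms by (simp add: field_simps)

lemma coefB: fixes a k m1 m2 :: real assumes "a \<noteq> 0"
  shows "(m1 / a) * k + ((- k * m1) * a - m2 * (- m1)) / (a * a) = (m1 / a) * (m2 / a)"
  using assms by (simp add: field_simps)

lemma vec_ident2:
  fixes A B :: "real^2"
  shows "A + (v1 *\<^sub>R (k *\<^sub>R B) + d1 *\<^sub>R A) + (v2 *\<^sub>R ((- k) *\<^sub>R A) + d2 *\<^sub>R B)
    = (1 + d1 - k * v2) *\<^sub>R A + (v1 * k + d2) *\<^sub>R B"
  by (simp add: vec_eq_iff forall_2 algebra_simps)


lemma exist:
  assumes p: "dot2 p p = 1"
  shows "\<exists>R. bicycle_rear F 1 T R \<and> R 0 - F 0 = p"
proof -
  define p1 where "p1 = dot2 p (F1 0)"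
  define p2 where "p2 = dot2 p (rot2 (F1 0))"
  define x0 where "x0 = G 0 + p1 *\<^sub>R G1 0 + p2 *\<^sub>R N 0"
  have pp: "p1 * p1 + p2 * p2 = 1" using pyth2[OF unitF[OF zero_in(1)], of p] p p1_def p2_def by simp
  have null: "mink x0 x0 = 0" unfolding x0_def xi_self[OF zero_in(1)] using pp by simp
  have x0G: "mink x0 (G 0) = -1" "mink x0 (G1 0) = p1" "mink x0 (N 0) = p2"
    unfolding x0_def using xi_gen[OF zero_in(1)] by simp_all
  have x0nz: "x0 \<noteq> 0" using x0G(1) by (auto simp: mink_zero_left)
  define a where "a = (\<lambda>s. - mink x0 (G s))"
  define m1 where "m1 = (\<lambda>s. mink x0 (G1 s))"
  define m2 where "m2 = (\<lambda>s. mink x0 (N s))"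
  have anz: "a t \<noteq> 0" if t: "t \<in> {0..T}" for t
    using null_timelike[OF null x0nz HG[OF t]] unfolding a_def by simp
  have sq: "m1 t * m1 t + m2 t * m2 t = a t * a t" if t: "t \<in> {0..T}" for t
    using expand_full[OF HG[OF t] unitG[OF t] GG1[OF t], of x0] null
    unfolding a_def m1_def m2_def N_def by simp
  define v1 where "v1 = (\<lambda>s. m1 s / a s)"
  define v2 where "v2 = (\<lambda>s. m2 s / a s)"
  define R where "R = (\<lambda>s. F s + v1 s *\<^sub>R F1 s + v2 s *\<^sub>R rot2 (F1 s))"
  have RF: "R t - F t = v1 t *\<^sub>R F1 t + v2 t *\<^sub>R rot2 (F1 t)" for t
    unfolding R_def by simp
  have da: "(a has_real_derivative - m1 t) (at t within {0..T})" if t: "t \<in> {0..T}" for t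
  proof -
    have "((\<lambda>s. mink x0 (G s)) has_real_derivative mink 0 (G t) + mink x0 (G1 t)) (at t within {0..T})"
      by (rule mink_deriv[OF has_vector_derivative_const dG[OF t]])
    hence "((\<lambda>s. mink x0 (G s)) has_real_derivative m1 t) (at t within {0..T})"
      by (simp add: mink_zero_left m1_def)
    thus ?thesis unfolding a_def by (rule DERIV_minus)
  qed
  have dm1: "(m1 has_real_derivative (- a t + kap t * m2 t)) (at t within {0..T})" if t: "t \<in> {0..T}" for t
  proof -
    have "((\<lambda>s. mink x0 (G1 s)) has_real_derivative mink 0 (G1 t) + mink x0 (G2 t)) (at t within {0..T})"
      by (rule mink_deriv[OF has_vector_derivative_const dG1[OF t]])
    moreover have "mink 0 (G1 t) + mink x0 (G2 t) = - a t + kap t * m2 t"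
      unfolding G2eq[OF t] a_def m2_def by (simp add: mink_lin)
    ultimately show ?thesis unfolding m1_def by simp
  qed
  have dm2: "(m2 has_real_derivative (- kap t * m1 t)) (at t within {0..T})" if t: "t \<in> {0..T}" for t
  proof -
    have "((\<lambda>s. mink x0 (N s)) has_real_derivative mink 0 (N t) + mink x0 ((- kap t) *\<^sub>R G1 t)) (at t within {0..T})"
      by (rule mink_deriv[OF has_vector_derivative_const dN[OF t]])
    moreover have "mink 0 (N t) + mink x0 ((- kap t) *\<^sub>R G1 t) = - kap t * m1 t"
      unfolding m1_def by (simp add: mink_lin)
    ultimately show ?thesis unfolding m2_def by (simp add: N_def)
  qed
  have track: "bicycle_rear F 1 T R"
    unfolding bicycle_rear_def
  proof (intro ballI conjI)
    fix t assume t: "t \<in> {0..T}"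
    have u: "dot2 (F1 t) (F1 t) = 1" by (rule unitF[OF t])
    have "dot2 (R t - F t) (R t - F t) = v1 t * v1 t + v2 t * v2 t"
      unfolding RF using u unfolding dot2_def rot2_def by simp algebra
    also have "\<dots> = (m1 t * m1 t + m2 t * m2 t) / (a t * a t)" unfolding v1_def v2_def by (simp add: add_divide_distrib)
    also have "\<dots> = 1" using sq[OF t] anz[OF t] by simp
    finally have "norm (R t - F t) = 1" by (simp add: norm2_1)
    thus "norm (F t - R t) = 1" by (simp add: norm_minus_commute)
    have dv1: "(v1 has_real_derivative ((- a t + kap t * m2 t) * a t - m1 t * (- m1 t)) / (a t * a t)) (at t within {0..T})"
      unfolding v1_def by (rule DERIV_divide[OF dm1[OF t] da[OF t] anz[OF t]])
    have dv2: "(v2 has_real_derivative ((- kap t * m1 t) * a t - m2 t * (- m1 t)) / (a t * a t)) (at t within {0..T})"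
      unfolding v2_def by (rule DERIV_divide[OF dm2[OF t] da[OF t] anz[OF t]])
    have "(R has_vector_derivative (F1 t + (v1 t *\<^sub>R F2 t + (((- a t + kap t * m2 t) * a t - m1 t * (- m1 t)) / (a t * a t)) *\<^sub>R F1 t)
        + (v2 t *\<^sub>R rot2 (F2 t) + (((- kap t * m1 t) * a t - m2 t * (- m1 t)) / (a t * a t)) *\<^sub>R rot2 (F1 t)))) (at t within {0..T})"
      unfolding R_def
      by (intro has_vector_derivative_add has_vector_derivative_scaleR dF[OF t] dF1[OF t] rot2_deriv[OF dF1[OF t]] dv1 dv2)
    moreover have "F1 t + (v1 t *\<^sub>R F2 t + (((- a t + kap t * m2 t) * a t - m1 t * (- m1 t)) / (a t * a t)) *\<^sub>R F1 t)
        + (v2 t *\<^sub>R rot2 (F2 t) + (((- kap t * m1 t) * a t - m2 t * (- m1 t)) / (a t * a t)) *\<^sub>R rot2 (F1 t))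
        = (- v1 t) *\<^sub>R (F t - R t)"
    proof -
      have "F1 t + (v1 t *\<^sub>R F2 t + (((- a t + kap t * m2 t) * a t - m1 t * (- m1 t)) / (a t * a t)) *\<^sub>R F1 t)
        + (v2 t *\<^sub>R rot2 (F2 t) + (((- kap t * m1 t) * a t - m2 t * (- m1 t)) / (a t * a t)) *\<^sub>R rot2 (F1 t))
        = (1 + (((- a t + kap t * m2 t) * a t - m1 t * (- m1 t)) / (a t * a t)) - kap t * v2 t) *\<^sub>R F1 t
          + (v1 t * kap t + (((- kap t * m1 t) * a t - m2 t * (- m1 t)) / (a t * a t))) *\<^sub>R rot2 (F1 t)"
        unfolding rotF2[OF t] unfolding F2eq[OF t] by (rule vec_ident2)
      also have "\<dots> = (v1 t * v1 t) *\<^sub>R F1 t + (v1 t * v2 t) *\<^sub>R rot2 (F1 t)"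
        unfolding v1_def v2_def coefA[OF anz[OF t]] coefB[OF anz[OF t]] by simp
      also have "\<dots> = v1 t *\<^sub>R (R t - F t)"
        unfolding RF by (simp add: scaleR_add_right)
      also have "\<dots> = (- v1 t) *\<^sub>R (F t - R t)"
        by (simp add: algebra_simps)
      finally show ?thesis .
    qed
    ultimately have h: "(R has_vector_derivative (- v1 t) *\<^sub>R (F t - R t)) (at t within {0..T})"
      by (rule has_vector_derivative_eq_rhs)
    show "\<exists>v c. (R has_vector_derivative v) (at t within {0..T}) \<and> v = c *\<^sub>R (F t - R t)"
      using h by blast
  qed
  have "a 0 = 1" unfolding a_def using x0G by simp
  hence "R 0 - F 0 = p1 *\<^sub>R F1 0 + p2 *\<^sub>R rot2 (F1 0)"
    unfolding RF v1_def v2_def m1_def m2_def using x0G by simp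
  also have "\<dots> = p" unfolding p1_def p2_def by (rule recon2[OF unitF[OF zero_in(1)], symmetric])
  finally show ?thesis using track by blast
qed


lemma dot2_facts:
  assumes "dot2 a a = 1"
  shows "dot2 a (rot2 a) = 0" "dot2 (rot2 a) a = 0" "dot2 (rot2 a) (rot2 a) = 1"
    "dot2 (- a) a = -1" "dot2 (- a) (rot2 a) = 0" "dot2 (- rot2 a) a = 0" "dot2 (- rot2 a) (rot2 a) = -1"
    "dot2 (- a) (- a) = 1" "dot2 (- rot2 a) (- rot2 a) = 1"
  using assms by (simp_all add: dot2_def rot2_def algebra_simps)

lemma unit_case:
  assumes p: "dot2 p p = 1" and H: "bicycle_monodromy F 1 T p = p" and that: "F1 0 = F1 T"
  shows "\<exists>\<mu>. G T + dot2 p (F1 0) *\<^sub>R G1 T + dot2 p (rot2 (F1 0)) *\<^sub>R N T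
      = \<mu> *\<^sub>R (G 0 + dot2 p (F1 0) *\<^sub>R G1 0 + dot2 p (rot2 (F1 0)) *\<^sub>R N 0)"
proof -
  obtain R where R: "bicycle_rear F 1 T R" and R0: "R 0 - F 0 = p" using exist[OF p] by blast
  have RT: "R T - F T = p" using mono_val[OF R] R0 H by simp
  have "u1 R T = dot2 p (F1 0)" "u2 R T = dot2 p (rot2 (F1 0))"
    using RT that unfolding u1_def u2_def by simp_all
  moreover have "u1 R 0 = dot2 p (F1 0)" "u2 R 0 = dot2 p (rot2 (F1 0))"
    using R0 unfolding u1_def u2_def by simp_all
  ultimately show ?thesis using track_xi[OF R] unfolding xi_def by simp
qed

end

lemma lorentz_fix:
  fixes X Y X0 Y0 :: "real^3"
  assumes f0: "mink X0 X0 = -1" "mink Y0 Y0 = 1" "mink X0 Y0 = 0"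
    and f: "mink X X = -1"
    and pos: "X $ 3 > 0" "X0 $ 3 > 0"
    and e1: "X + Y = m1 *\<^sub>R (X0 + Y0)" and e2: "X - Y = m2 *\<^sub>R (X0 - Y0)"
    and e3: "X + Z = m3 *\<^sub>R (X0 + lcross X0 Y0)" and e4: "X - Z = m4 *\<^sub>R (X0 - lcross X0 Y0)"
  shows "X = X0 \<and> Y = Y0"
proof -
  define Z0 where "Z0 = lcross X0 Y0"
  note fr = mink_frame[OF f0, folded Z0_def]
  have s0: "mink Y0 X0 = 0" "mink Z0 X0 = 0" "mink Z0 Y0 = 0" "mink X0 Z0 = 0" "mink Y0 Z0 = 0" "mink Z0 Z0 = 1"
    using fr f0 by (simp_all add: mink_sym)
  have a: "2 *\<^sub>R X = m1 *\<^sub>R (X0 + Y0) + m2 *\<^sub>R (X0 - Y0)"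
    using e1 e2 by (metis (no_types) add_diff_eq diff_add_cancel scaleR_2 add.commute add.left_commute)
  have b: "2 *\<^sub>R X = m3 *\<^sub>R (X0 + Z0) + m4 *\<^sub>R (X0 - Z0)"
    using e3 e4 unfolding Z0_def[symmetric] by (metis (no_types) add_diff_eq diff_add_cancel scaleR_2 add.commute add.left_commute)
  have V: "m1 *\<^sub>R (X0 + Y0) + m2 *\<^sub>R (X0 - Y0) = m3 *\<^sub>R (X0 + Z0) + m4 *\<^sub>R (X0 - Z0)"
    using a b by simp
  have "mink (m1 *\<^sub>R (X0 + Y0) + m2 *\<^sub>R (X0 - Y0)) Y0 = mink (m3 *\<^sub>R (X0 + Z0) + m4 *\<^sub>R (X0 - Z0)) Y0"
    using V by simp
  hence c1: "m1 - m2 = 0" using f0 s0 by (simp add: mink_lin)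
  have "mink (m1 *\<^sub>R (X0 + Y0) + m2 *\<^sub>R (X0 - Y0)) Z0 = mink (m3 *\<^sub>R (X0 + Z0) + m4 *\<^sub>R (X0 - Z0)) Z0"
    using V by simp
  hence c2: "m3 - m4 = 0" using f0 s0 by (simp add: mink_lin)
  have "mink (m1 *\<^sub>R (X0 + Y0) + m2 *\<^sub>R (X0 - Y0)) X0 = mink (m3 *\<^sub>R (X0 + Z0) + m4 *\<^sub>R (X0 - Z0)) X0"
    using V by simp
  hence c3: "m1 + m2 = m3 + m4" using f0 s0 by (simp add: mink_lin)
  have m2e: "m2 = m1" using c1 by simp
  have X: "X = m1 *\<^sub>R X0"
  proof -
    have "\<forall>i. 2 * X $ i = 2 * (m1 * X0 $ i)" using a m2e by (simp add: vec_eq_iff algebra_simps)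
    thus ?thesis by (simp add: vec_eq_iff)
  qed
  have Y: "Y = m1 *\<^sub>R Y0"
  proof -
    have "Y = m1 *\<^sub>R (X0 + Y0) - X" using e1 by (simp add: algebra_simps)
    thus ?thesis using X by (simp add: algebra_simps)
  qed
  have "m1 * m1 = 1" using f f0 X by (simp add: mink_lin)
  moreover have "m1 > 0" using pos X by (simp add: zero_less_mult_iff)
  ultimately have "m1 = 1" by (metis abs_of_pos mult_cancel_left1 mult_left_cancel real_sqrt_abs2 real_sqrt_mult_self
      less_numeral_extra(3) mult.commute)
  thus ?thesis using X Y by simp
qed


context bike begin

theorem main:
  assumes cF: "F1 0 = F1 T"
  shows "(G 0 = G T \<and> G1 0 = G1 T) \<longleftrightarrow> (\<forall>p. dot2 p p = 1 \<longrightarrow> bicycle_monodromy F 1 T p = p)"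
proof
  assume cl: "G 0 = G T \<and> G1 0 = G1 T"
  hence NT: "N T = N 0" by (simp add: N_def)
  show "\<forall>p. dot2 p p = 1 \<longrightarrow> bicycle_monodromy F 1 T p = p"
  proof (intro allI impI)
    fix p :: "real^2" assume p: "dot2 p p = 1"
    obtain R where R: "bicycle_rear F 1 T R" and R0: "R 0 - F 0 = p" using exist[OF p] by blast
    obtain \<mu> where m: "xi R T = \<mu> *\<^sub>R xi R 0" using track_xi[OF R] by blast
    have "-1 = \<mu> * mink (xi R 0) (G 0)"
      using xi_coords(1)[OF zero_in(2), of R] m cl by (simp add: mink_lin)
    hence "\<mu> = 1" using xi_coords(1)[OF zero_in(1), of R] by simp
    hence xx: "xi R T = xi R 0" using m by simp
    have "u1 R T = u1 R 0"
      using xi_coords(2)[OF zero_in(2), of R] xi_coords(2)[OF zero_in(1), of R] xx cl by simp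
    moreover have "u2 R T = u2 R 0"
      using xi_coords(3)[OF zero_in(2), of R] xi_coords(3)[OF zero_in(1), of R] xx NT by simp
    ultimately have "R T - F T = R 0 - F 0"
      using recon[OF zero_in(2), of R] recon[OF zero_in(1), of R] cF by simp
    thus "bicycle_monodromy F 1 T p = p" using mono_val[OF R] R0 by simp
  qed
next
  assume H: "\<forall>p. dot2 p p = 1 \<longrightarrow> bicycle_monodromy F 1 T p = p"
  define \<tau> where "\<tau> = F1 0"
  have u: "dot2 \<tau> \<tau> = 1" unfolding \<tau>_def by (rule unitF[OF zero_in(1)])
  note df = dot2_facts[OF u]
  have uc: "\<exists>\<mu>. G T + dot2 p \<tau> *\<^sub>R G1 T + dot2 p (rot2 \<tau>) *\<^sub>R N T
      = \<mu> *\<^sub>R (G 0 + dot2 p \<tau> *\<^sub>R G1 0 + dot2 p (rot2 \<tau>) *\<^sub>R N 0)" if "dot2 p p = 1" for p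
    unfolding \<tau>_def using unit_case[OF that _ cF] H that by blast
  obtain m1 where e1: "G T + G1 T = m1 *\<^sub>R (G 0 + G1 0)" using uc[of \<tau>] u df by auto
  obtain m2 where e2: "G T - G1 T = m2 *\<^sub>R (G 0 - G1 0)" using uc[of "- \<tau>"] u df by (auto simp: algebra_simps)
  obtain m3 where e3: "G T + N T = m3 *\<^sub>R (G 0 + N 0)" using uc[of "rot2 \<tau>"] u df by auto
  obtain m4 where e4: "G T - N T = m4 *\<^sub>R (G 0 - N 0)" using uc[of "- rot2 \<tau>"] u df by (auto simp: algebra_simps)
  show "G 0 = G T \<and> G1 0 = G1 T"
    using lorentz_fix[OF HG[OF zero_in(1)] unitG[OF zero_in(1)] GG1[OF zero_in(1)] HG[OF zero_in(2)]
        HG3[OF zero_in(2)] HG3[OF zero_in(1)] e1 e2 e3[unfolded N_def] e4[unfolded N_def]]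
    by simp
qed

end


theorem corollary3p4:
  fixes F :: "real \<Rightarrow> real^2" and G :: "real \<Rightarrow> real^3" and T :: real
  assumes "T > 0"
    and "smooth_curve T F"
    and "\<forall>t\<in>{0..T}. norm (deriv1 T F t) = 1"
    and "C1_closed T F"
    and "smooth_curve T G"
    and "\<forall>t\<in>{0..T}. G t \<in> H2"
    and "\<forall>t\<in>{0..T}. mink (deriv1 T G t) (deriv1 T G t) = 1"
    and "\<forall>t\<in>{0..T}. geodesic_curvature T G t = signed_curvature T F t"
  shows "C1_closed T G \<longleftrightarrow> (\<forall>p. norm p = 1 \<longrightarrow> bicycle_monodromy F 1 T p = p)"
proof -
  note Tpos = assms(1)
  obtain DF where DF0: "DF 0 = F"
    and DFd: "\<forall>n. \<forall>t\<in>{0..T}. (DF n has_vector_derivative DF (Suc n) t) (at t within {0..T})"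
    using assms(2) unfolding smooth_curve_def by blast
  obtain DG where DG0: "DG 0 = G"
    and DGd: "\<forall>n. \<forall>t\<in>{0..T}. (DG n has_vector_derivative DG (Suc n) t) (at t within {0..T})"
    using assms(5) unfolding smooth_curve_def by blast
  have dF: "(F has_vector_derivative DF (Suc 0) t) (at t within {0..T})" if "t \<in> {0..T}" for t
    using DFd that DF0 by metis
  have dF1: "(DF (Suc 0) has_vector_derivative DF (Suc (Suc 0)) t) (at t within {0..T})" if "t \<in> {0..T}" for t
    using DFd that by blast
  have dG: "(G has_vector_derivative DG (Suc 0) t) (at t within {0..T})" if "t \<in> {0..T}" for t
    using DGd that DG0 by metis
  have dG1: "(DG (Suc 0) has_vector_derivative DG (Suc (Suc 0)) t) (at t within {0..T})" if "t \<in> {0..T}" for t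
    using DGd that by blast
  have d1F: "deriv1 T F t = DF (Suc 0) t" if t: "t \<in> {0..T}" for t
    unfolding deriv1_def by (rule vector_derivative_within_closed_interval[OF Tpos t dF[OF t]])
  have d1G: "deriv1 T G t = DG (Suc 0) t" if t: "t \<in> {0..T}" for t
    unfolding deriv1_def by (rule vector_derivative_within_closed_interval[OF Tpos t dG[OF t]])
  have d2F: "deriv2 T F t = DF (Suc (Suc 0)) t" if t: "t \<in> {0..T}" for t
  proof -
    have "(deriv1 T F has_vector_derivative DF (Suc (Suc 0)) t) (at t within {0..T})"
      by (rule has_vector_derivative_transform[OF t _ dF1[OF t]]) (simp add: d1F)
    thus ?thesis unfolding deriv2_def by (rule vector_derivative_within_closed_interval[OF Tpos t])
  qed
  have d2G: "deriv2 T G t = DG (Suc (Suc 0)) t" if t: "t \<in> {0..T}" for t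
  proof -
    have "(deriv1 T G has_vector_derivative DG (Suc (Suc 0)) t) (at t within {0..T})"
      by (rule has_vector_derivative_transform[OF t _ dG1[OF t]]) (simp add: d1G)
    thus ?thesis unfolding deriv2_def by (rule vector_derivative_within_closed_interval[OF Tpos t])
  qed
  interpret bike T F "DF (Suc 0)" "DF (Suc (Suc 0))" G "DG (Suc 0)" "DG (Suc (Suc 0))"
  proof
    show "0 < T" by (rule Tpos)
    show "\<And>t. t \<in> {0..T} \<Longrightarrow> (F has_vector_derivative DF (Suc 0) t) (at t within {0..T})" by (rule dF)
    show "\<And>t. t \<in> {0..T} \<Longrightarrow> (DF (Suc 0) has_vector_derivative DF (Suc (Suc 0)) t) (at t within {0..T})" by (rule dF1)
    show "\<And>t. t \<in> {0..T} \<Longrightarrow> (G has_vector_derivative DG (Suc 0) t) (at t within {0..T})" by (rule dG)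
    show "\<And>t. t \<in> {0..T} \<Longrightarrow> (DG (Suc 0) has_vector_derivative DG (Suc (Suc 0)) t) (at t within {0..T})" by (rule dG1)
    show "\<And>t. t \<in> {0..T} \<Longrightarrow> dot2 (DF (Suc 0) t) (DF (Suc 0) t) = 1"
      using assms(3) d1F by (simp add: norm2_1)
    show "\<And>t. t \<in> {0..T} \<Longrightarrow> mink (G t) (G t) = -1"
      using assms(6) by (simp add: H2_def)
    show "\<And>t. t \<in> {0..T} \<Longrightarrow> G t $ 3 > 0"
      using assms(6) by (simp add: H2_def)
    show "\<And>t. t \<in> {0..T} \<Longrightarrow> mink (DG (Suc 0) t) (DG (Suc 0) t) = 1"
      using assms(7) d1G by simp
    show "\<And>t. t \<in> {0..T} \<Longrightarrow> mink (DG (Suc (Suc 0)) t + mink (DG (Suc (Suc 0)) t) (G t) *\<^sub>R G t)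
         (lcross (G t) (DG (Suc 0) t)) = det2 (DF (Suc 0) t) (DF (Suc (Suc 0)) t)"
      using assms(8) d1F d1G d2F d2G
      by (simp add: geodesic_curvature_def signed_curvature_def cov_accel_def)
  qed
  have I0: "0 \<in> {0..T}" and IT: "T \<in> {0..T}" using Tpos by auto
  have cF: "DF (Suc 0) 0 = DF (Suc 0) T"
    using assms(4) d1F[OF I0] d1F[OF IT] unfolding C1_closed_def by simp
  have "C1_closed T G \<longleftrightarrow> (G 0 = G T \<and> DG (Suc 0) 0 = DG (Suc 0) T)"
    unfolding C1_closed_def using d1G[OF I0] d1G[OF IT] by simp
  also have "\<dots> \<longleftrightarrow> (\<forall>p. dot2 p p = 1 \<longrightarrow> bicycle_monodromy F 1 T p = p)"
    by (rule main[OF cF])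
  also have "\<dots> \<longleftrightarrow> (\<forall>p. norm p = 1 \<longrightarrow> bicycle_monodromy F 1 T p = p)"
    by (simp add: norm2_1)
  finally show ?thesis .
qed

end
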